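(* Let $\mathcal{P}=(\mathcal{R},\mathcal{F},\mathcal{D},\mathcal{B})$ be a ground Capacity Logic Program. If $K_1$ and $K_2$ are pairwise incompatible sets of capacity composite choices for $\mathcal{P}$ that are equivalent ($\omega_{K_1}=\omega_{K_2}$), then $\xi_c(K_1)=\xi_c(K_2)$.
   Context: All sets are finite; there are no function symbols. Belief domains: a belief domain $D$ has a finite nonempty frame of discernment $X_D$ and a mass function $\mathit{mass}(D,\cdot):\mathbb{P}(X_D)\to\mathbb{R}$ with $\mathit{mass}(D,\emptyset)=0$, $\mathit{mass}(D,A)\ge 0$, $\sum_{A\subseteq X_D}\mathit{mass}(D,A)=1$. For $A\subseteq X_D$: $\mathit{Belief}(D,A)=\sum_{B\subseteq A}\mathit{mass}(D,B)$, $\mathit{Plaus}(D,A)=1-\mathit{Belief}(D,X_D\setminus A)$. Capacity Logic Program (CaLP): a tuple $\mathcal{P}=(\mathcal{R},\mathcal{F},\mathcal{D},\mathcal{B})$ where $\mathcal{R}$ is a finite set of ground rules, $\mathcal{F}$ a finite set of ground probabilistic facts $p::f$ ($p\in[0,1]$, $f$ a ground atom), $\mathcal{D}$ a finite set of belief domains, and $\mathcal{B}$ the set of all ground belief facts $\mathit{belief}(D,B)$ with $D\in\mathcal{D}$, $B\subseteq X_D$. We write $\mathit{belief}(D,\neg B)$ for $\mathit{belief}(D,X_D\setminus B)$. Canonicalization: for a set $Bel$ of belief facts, $\mathrm{canon}(Bel)=\{\mathit{belief}(D,\bigcap_{\mathit{belief}(D,B_i)\in Bel}B_i)\mid D \text{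 a domain occurring in } Bel\}$; $Bel$ is consistent if $\mathrm{canon}(Bel)$ contains no fact with event $\emptyset$. Belief worlds: a belief world is $w=(\mathcal{R},\mathcal{F}',\mathcal{D},\mathcal{B}')$ with $\mathcal{F}'\subseteq\mathcal{F}$ and $\mathcal{B}'\subseteq\mathcal{B}$ consistent, canonical, and containing exactly one belief fact for every domain in $\mathcal{D}$. $W^{\mathcal{D}}_{\mathcal{P}}$ is the set of belief worlds. Capacity atomic choices: either an atomic Bayesian choice $(f,k)$ with $p::f\in\mathcal{F}$ and $k\in\{0,1\}$, or an atomic belief choice $\mathit{belief}(D,B)$ with $D\in\mathcal{D}$, $B\subseteq X_D$. For a set $\kappa$ of atomic choices, $Bay(\kappa)$ is its set of Bayesian choices and $Bel(\kappa)$ its set of belief choices. $\kappa$ is consistent if $Bay(\kappa)$ contains no pair $(f,0),(f,1)$ and $Bel(\kappa)$ is consistent. A capacity composite choice is a consistent set of capacity atomic choices. Compatible worlds: for a capacity composite choice $\kappa$, $\omega_\kappa$ is the set of belief worlds $(\mathcal{R},\mathcal{F}',\mathcal{D},\mathcal{B}')$ such that $f\in\mathcal{F}'$ for every $(f,1)\in\kappa$, $f\notin\mathcal{F}'$ for every $(f,0)\in\kappa$, and $\mathrm{canon}(Bel(\kappa))\subseteq\mathcal{B}'$. For a set $K$, $\omega_K=\bigcup_{\kappa\in K}\omega_\kappa$. $K_1,K_2$ are equivalent if $\omega_{K_1}=\omega_{K_2}$. Two capacity composite choices are incompatible if their union is not consistent; $K$ is pairwise incompatible if any two distinct elements are incompatible.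 Interval arithmetic: $[a,b]\,\widehat{\times}\,[c,d]=[ac,bd]$, $[a,b]\,\widehat{+}\,[c,d]=[a+c,b+d]$ (nonnegative intervals), with iterated versions $\widehat{\prod},\widehat{\sum}$. Capacity of capacity composite choices: $\rho_c(\kappa)=\prod_{(f,1)\in\kappa}p_f\prod_{(f,0)\in\kappa}(1-p_f)$, where $p_f$ is the probability of $f$ in $\mathcal{F}$. Then $\rho^{Comp}_{\mathcal{B}}(\kappa)=[\rho_c(\kappa),\rho_c(\kappa)]\ \widehat{\times}\ \widehat{\prod}_{\mathit{belief}(D,E)\in\mathrm{canon}(Bel(\kappa))}[\mathit{Belief}(D,E),\mathit{Plaus}(D,E)]$, and for a pairwise incompatible set $K$, $\xi_c(K)=\widehat{\sum}_{\kappa\in K}\rho^{Comp}_{\mathcal{B}}(\kappa)$. *)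

theory Defs
  imports Complex_Main
begin

text \<open>Rules are kept abstract (type 'r); they play no role in
 the capacity semantics of composite choices.  The probabilistic facts p::f are
 represented by the finite set of their atoms together with the probability
 p_f of each atom.\<close>

record ('r, 'f, 'd, 'x) calp =
  rules   :: "'r set"
  pfacts  :: "'f set"
  prob    :: "'f \<Rightarrow> real"
  domains :: "'d set"
  frame   :: "'d \<Rightarrow> 'x set"
  mass    :: "'d \<Rightarrow> 'x set \<Rightarrow> real"

definition belief_domain :: "'x set \<Rightarrow> ('x set \<Rightarrow> real) \<Rightarrow> bool" where
  "belief_domain X m \<longleftrightarrow> finite X \<and> X \<noteq> {} \<and> m {} = 0 \<and>
     (\<forall>A\<subseteq>X. m A \<ge> 0) \<and> (\<Sum>A\<in>Pow X. m A) = 1"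

definition wf_calp :: "('r, 'f, 'd, 'x) calp \<Rightarrow> bool" where
  "wf_calp P \<longleftrightarrow> finite (rules P) \<and> finite (pfacts P) \<and>
     (\<forall>f\<in>pfacts P. 0 \<le> prob P f \<and> prob P f \<le> 1) \<and>
     finite (domains P) \<and>
     (\<forall>D\<in>domains P. belief_domain (frame P D) (mass P D))"

definition Belief :: "('r, 'f, 'd, 'x) calp \<Rightarrow> 'd \<Rightarrow> 'x set \<Rightarrow> real" where
  "Belief P D A = (\<Sum>B\<in>Pow A. mass P D B)"

definition Plaus :: "('r, 'f, 'd, 'x) calp \<Rightarrow> 'd \<Rightarrow> 'x set \<Rightarrow> real" where
  "Plaus P D A = 1 - Belief P D (frame P D - A)"

text \<open>The set \<B> of all ground belief facts belief(D,B), as pairs (D,B).\<close>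
definition belief_facts :: "('r, 'f, 'd, 'x) calp \<Rightarrow> ('d \<times> 'x set) set" where
  "belief_facts P = {(D, B). D \<in> domains P \<and> B \<subseteq> frame P D}"

definition canon :: "('d \<times> 'x set) set \<Rightarrow> ('d \<times> 'x set) set" where
  "canon Bel = {(D, \<Inter>{B. (D, B) \<in> Bel}) | D. \<exists>B. (D, B) \<in> Bel}"

definition bel_consistent :: "('d \<times> 'x set) set \<Rightarrow> bool" where
  "bel_consistent Bel \<longleftrightarrow> (\<forall>D. (D, {}) \<notin> canon Bel)"

definition belief_worlds ::
  "('r, 'f, 'd, 'x) calp \<Rightarrow> ('r set \<times> 'f set \<times> 'd set \<times> ('d \<times> 'x set) set) set" where
  "belief_worlds P = {(R, F', Ds, B'). R = rules P \<and> Ds = domains P \<and>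
      F' \<subseteq> pfacts P \<and> B' \<subseteq> belief_facts P \<and> bel_consistent B' \<and>
      canon B' = B' \<and> (\<forall>D\<in>domains P. \<exists>!B. (D, B) \<in> B')}"

datatype ('f, 'd, 'x) achoice = BayC 'f bool | BelC 'd "'x set"

definition atomic_choice :: "('r, 'f, 'd, 'x) calp \<Rightarrow> ('f, 'd, 'x) achoice \<Rightarrow> bool" where
  "atomic_choice P c = (case c of
      BayC f k \<Rightarrow> f \<in> pfacts P
    | BelC D B \<Rightarrow> D \<in> domains P \<and> B \<subseteq> frame P D)"

definition Bay :: "('f, 'd, 'x) achoice set \<Rightarrow> ('f \<times> bool) set" where
  "Bay \<kappa> = {(f, k). BayC f k \<in> \<kappa>}"

definition Bel :: "('f, 'd, 'x) achoice set \<Rightarrow> ('d \<times> 'x set) set" where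
  "Bel \<kappa> = {(D, B). BelC D B \<in> \<kappa>}"

definition choice_consistent :: "('f, 'd, 'x) achoice set \<Rightarrow> bool" where
  "choice_consistent \<kappa> \<longleftrightarrow>
     (\<forall>f. \<not> ((f, False) \<in> Bay \<kappa> \<and> (f, True) \<in> Bay \<kappa>)) \<and> bel_consistent (Bel \<kappa>)"

definition composite_choice :: "('r, 'f, 'd, 'x) calp \<Rightarrow> ('f, 'd, 'x) achoice set \<Rightarrow> bool" where
  "composite_choice P \<kappa> \<longleftrightarrow> (\<forall>c\<in>\<kappa>. atomic_choice P c) \<and> choice_consistent \<kappa>"

definition omega ::
  "('r, 'f, 'd, 'x) calp \<Rightarrow> ('f, 'd, 'x) achoice set
     \<Rightarrow> ('r set \<times> 'f set \<times> 'd set \<times> ('d \<times> 'x set) set) set" where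
  "omega P \<kappa> = {(R, F', Ds, B') \<in> belief_worlds P.
      (\<forall>f. (f, True) \<in> Bay \<kappa> \<longrightarrow> f \<in> F') \<and>
      (\<forall>f. (f, False) \<in> Bay \<kappa> \<longrightarrow> f \<notin> F') \<and>
      canon (Bel \<kappa>) \<subseteq> B'}"

definition omega_set ::
  "('r, 'f, 'd, 'x) calp \<Rightarrow> ('f, 'd, 'x) achoice set set
     \<Rightarrow> ('r set \<times> 'f set \<times> 'd set \<times> ('d \<times> 'x set) set) set" where
  "omega_set P K = (\<Union>\<kappa>\<in>K. omega P \<kappa>)"

definition incompatible :: "('f, 'd, 'x) achoice set \<Rightarrow> ('f, 'd, 'x) achoice set \<Rightarrow> bool" where
  "incompatible \<kappa>1 \<kappa>2 \<longleftrightarrow> \<not> choice_consistent (\<kappa>1 \<union> \<kappa>2)"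

definition pairwise_incompatible :: "('f, 'd, 'x) achoice set set \<Rightarrow> bool" where
  "pairwise_incompatible K \<longleftrightarrow>
     (\<forall>\<kappa>1\<in>K. \<forall>\<kappa>2\<in>K. \<kappa>1 \<noteq> \<kappa>2 \<longrightarrow> incompatible \<kappa>1 \<kappa>2)"

text \<open>Intervals [a,b] are pairs (a,b); interval arithmetic on nonnegative intervals.\<close>
definition imult :: "real \<times> real \<Rightarrow> real \<times> real \<Rightarrow> real \<times> real" where
  "imult I J = (fst I * fst J, snd I * snd J)"

definition iadd :: "real \<times> real \<Rightarrow> real \<times> real \<Rightarrow> real \<times> real" where
  "iadd I J = (fst I + fst J, snd I + snd J)"

definition iprod :: "('a \<Rightarrow> real \<times> real) \<Rightarrow> 'a set \<Rightarrow> real \<times> real" where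
  "iprod g A = ((\<Prod>a\<in>A. fst (g a)), (\<Prod>a\<in>A. snd (g a)))"

definition isum :: "('a \<Rightarrow> real \<times> real) \<Rightarrow> 'a set \<Rightarrow> real \<times> real" where
  "isum g A = ((\<Sum>a\<in>A. fst (g a)), (\<Sum>a\<in>A. snd (g a)))"

definition rho_c :: "('r, 'f, 'd, 'x) calp \<Rightarrow> ('f, 'd, 'x) achoice set \<Rightarrow> real" where
  "rho_c P \<kappa> = (\<Prod>f\<in>{f. (f, True) \<in> Bay \<kappa>}. prob P f) *
                 (\<Prod>f\<in>{f. (f, False) \<in> Bay \<kappa>}. 1 - prob P f)"

definition rho_comp :: "('r, 'f, 'd, 'x) calp \<Rightarrow> ('f, 'd, 'x) achoice set \<Rightarrow> real \<times> real" where
  "rho_comp P \<kappa> = imult (rho_c P \<kappa>, rho_c P \<kappa>)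
      (iprod (\<lambda>(D, E). (Belief P D E, Plaus P D E)) (canon (Bel \<kappa>)))"

definition xi_c :: "('r, 'f, 'd, 'x) calp \<Rightarrow> ('f, 'd, 'x) achoice set set \<Rightarrow> real \<times> real" where
  "xi_c P K = isum (rho_comp P) K"

end

theory Submission imports Defs begin

definition pin :: "('f,'d,'x) achoice set \<Rightarrow> 'd \<Rightarrow> bool" where
  "pin \<kappa> D \<longleftrightarrow> (\<exists>B. BelC D B \<in> \<kappa>)"
definition Iv :: "('f,'d,'x) achoice set \<Rightarrow> 'd \<Rightarrow> 'x set" where
  "Iv \<kappa> D = \<Inter>{B. BelC D B \<in> \<kappa>}"
definition bayok :: "'f set \<Rightarrow> ('f,'d,'x) achoice set \<Rightarrow> bool" where
  "bayok S \<kappa> \<longleftrightarrow> (\<forall>f. BayC f True \<in> \<kappa> \<longrightarrow> f \<in> S) \<and> (\<forall>f. BayC f False \<in> \<kappa> \<longrightarrow> f \<notin> S)"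
definition W where
  "W P S ev = (rules P, S, domains P, {(D, ev D) | D. D \<in> domains P})"
definition ess where
  "ess P \<kappa> = {(D, Iv \<kappa> D) | D. pin \<kappa> D \<and> Iv \<kappa> D \<noteq> frame P D}"

lemma canon_Bel: "canon (Bel \<kappa>) = {(D, Iv \<kappa> D) | D. pin \<kappa> D}"
  by (auto simp: canon_def Bel_def pin_def Iv_def)

lemma cc_iff: "choice_consistent \<kappa> \<longleftrightarrow>
   (\<forall>f. \<not>(BayC f False \<in> \<kappa> \<and> BayC f True \<in> \<kappa>)) \<and> (\<forall>D. pin \<kappa> D \<longrightarrow> Iv \<kappa> D \<noteq> {})"
  by (auto simp: choice_consistent_def bel_consistent_def canon_Bel Bay_def)

lemma pin_dom: "composite_choice P \<kappa> \<Longrightarrow> pin \<kappa> D \<Longrightarrow> D \<in> domains P"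
  by (auto simp: composite_choice_def pin_def atomic_choice_def split: achoice.splits)

lemma Iv_sub: "composite_choice P \<kappa> \<Longrightarrow> pin \<kappa> D \<Longrightarrow> Iv \<kappa> D \<subseteq> frame P D"
  by (force simp: composite_choice_def pin_def atomic_choice_def Iv_def split: achoice.splits)

lemma Iv_ne: "composite_choice P \<kappa> \<Longrightarrow> pin \<kappa> D \<Longrightarrow> Iv \<kappa> D \<noteq> {}"
  by (auto simp: composite_choice_def cc_iff)

lemma W_in_omega:
  assumes "composite_choice P \<kappa>" "S \<subseteq> pfacts P"
    "\<forall>D\<in>domains P. ev D \<subseteq> frame P D \<and> ev D \<noteq> {}" "bayok S \<kappa>"
    "\<forall>D. pin \<kappa> D \<longrightarrow> ev D = Iv \<kappa> D"
  shows "W P S ev \<in> omega P \<kappa>"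
proof -
  let ?B = "{(D, ev D) | D. D \<in> domains P}"
  have c: "canon ?B = ?B" by (auto simp: canon_def)
  have "?B \<subseteq> belief_facts P" using assms(3) by (auto simp: belief_facts_def)
  moreover have "bel_consistent ?B" using assms(3) c by (auto simp: bel_consistent_def)
  moreover have "\<forall>D\<in>domains P. \<exists>!B. (D, B) \<in> ?B" by auto
  ultimately have "W P S ev \<in> belief_worlds P" using c assms(2)
    by (simp add: W_def belief_worlds_def)
  moreover have "canon (Bel \<kappa>) \<subseteq> ?B" using assms(1,5) pin_dom
    by (auto simp: canon_Bel)
  ultimately show ?thesis using assms(4)
    by (auto simp: omega_def W_def bayok_def Bay_def)
qed

lemma omega_W:
  assumes "W P S ev \<in> omega P \<kappa>"
  shows "bayok S \<kappa> \<and> (\<forall>D. pin \<kappa> D \<longrightarrow> D \<in> domains P \<and> ev D = Iv \<kappa> D)"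
proof -
  have "canon (Bel \<kappa>) \<subseteq> {(D, ev D) | D. D \<in> domains P}"
    and "bayok S \<kappa>"
    using assms by (auto simp: omega_def W_def bayok_def Bay_def)
  then show ?thesis by (auto simp: canon_Bel)
qed

lemma compat:
  assumes "choice_consistent \<kappa>" "choice_consistent \<kappa>'" "bayok S \<kappa>" "bayok S \<kappa>'"
    "\<forall>D. pin \<kappa> D \<and> pin \<kappa>' D \<longrightarrow> Iv \<kappa> D \<inter> Iv \<kappa>' D \<noteq> {}"
  shows "choice_consistent (\<kappa> \<union> \<kappa>')"
proof -
  have "pin (\<kappa> \<union> \<kappa>') D \<longleftrightarrow> pin \<kappa> D \<or> pin \<kappa>' D" for D by (auto simp: pin_def)
  moreover have "Iv (\<kappa> \<union> \<kappa>') D = Iv \<kappa> D \<inter> Iv \<kappa>' D" for D by (auto simp: Iv_def)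
  moreover have "\<not> pin \<kappa> D \<Longrightarrow> Iv \<kappa> D = UNIV" "\<not> pin \<kappa>' D \<Longrightarrow> Iv \<kappa>' D = UNIV" for D
    by (auto simp: Iv_def pin_def)
  ultimately show ?thesis using assms unfolding cc_iff bayok_def
    by (metis Int_UNIV_left Int_UNIV_right Un_iff)
qed


lemma ess_alt: "ess P \<kappa> = {x \<in> canon (Bel \<kappa>). snd x \<noteq> frame P (fst x)}"
  by (auto simp: ess_def canon_Bel)

lemma frne: "wf_calp P \<Longrightarrow> D \<in> domains P \<Longrightarrow> frame P D \<noteq> {}"
  by (auto simp: wf_calp_def belief_domain_def)

lemma match:
  assumes wf: "wf_calp P" and K1: "\<forall>\<kappa>\<in>K1. composite_choice P \<kappa>" and K2: "\<forall>\<kappa>\<in>K2. composite_choice P \<kappa>"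
    and pw: "pairwise_incompatible K1" and eq: "omega_set P K1 = omega_set P K2"
    and k1: "\<kappa>1 \<in> K1" and b1: "bayok S \<kappa>1" and S: "S \<subseteq> pfacts P"
  shows "\<exists>\<kappa>2\<in>K2. bayok S \<kappa>2 \<and> ess P \<kappa>2 = ess P \<kappa>1"
proof -
  have c1: "composite_choice P \<kappa>1" using K1 k1 by auto
  define ev where "ev D = (if pin \<kappa>1 D then Iv \<kappa>1 D else frame P D)" for D
  have evok: "\<forall>D\<in>domains P. ev D \<subseteq> frame P D \<and> ev D \<noteq> {}"
    using Iv_sub[OF c1] Iv_ne[OF c1] frne[OF wf] by (auto simp: ev_def)
  have "W P S ev \<in> omega P \<kappa>1"
    by (rule W_in_omega[OF c1 S evok b1]) (simp add: ev_def)
  then have "W P S ev \<in> omega_set P K2" using eq k1 by (auto simp: omega_set_def)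
  then obtain \<kappa>2 where k2: "\<kappa>2 \<in> K2" and w2: "W P S ev \<in> omega P \<kappa>2"
    by (auto simp: omega_set_def)
  have c2: "composite_choice P \<kappa>2" using K2 k2 by auto
  note o2 = omega_W[OF w2]
  have "ess P \<kappa>2 = ess P \<kappa>1"
  proof
    show "ess P \<kappa>2 \<subseteq> ess P \<kappa>1"
    proof
      fix x assume "x \<in> ess P \<kappa>2"
      then obtain D where x: "x = (D, Iv \<kappa>2 D)" "pin \<kappa>2 D" "Iv \<kappa>2 D \<noteq> frame P D"
        by (auto simp: ess_def)
      then have "ev D = Iv \<kappa>2 D" using o2 by auto
      then have "pin \<kappa>1 D" "Iv \<kappa>1 D = Iv \<kappa>2 D" using x by (auto simp: ev_def split: if_splits)
      then show "x \<in> ess P \<kappa>1" using x by (auto simp: ess_def)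
    qed
  next
    show "ess P \<kappa>1 \<subseteq> ess P \<kappa>2"
    proof
      fix x assume "x \<in> ess P \<kappa>1"
      then obtain D where x: "x = (D, Iv \<kappa>1 D)" "pin \<kappa>1 D" "Iv \<kappa>1 D \<noteq> frame P D"
        by (auto simp: ess_def)
      show "x \<in> ess P \<kappa>2"
      proof (cases "pin \<kappa>2 D")
        case True
        then have "Iv \<kappa>2 D = Iv \<kappa>1 D" using o2 x by (auto simp: ev_def)
        then show ?thesis using x True by (auto simp: ess_def)
      next
        case False
        define ev' where "ev' = ev(D := frame P D)"
        have evok': "\<forall>D\<in>domains P. ev' D \<subseteq> frame P D \<and> ev' D \<noteq> {}"
          using evok frne[OF wf] by (auto simp: ev'_def)
        have "W P S ev' \<in> omega P \<kappa>2"
          by (rule W_in_omega[OF c2 S evok']) (use o2 False in \<open>auto simp: ev'_def\<close>)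
        then have "W P S ev' \<in> omega_set P K1" using eq k2 by (auto simp: omega_set_def)
        then obtain \<kappa>1' where k1': "\<kappa>1' \<in> K1" and w1': "W P S ev' \<in> omega P \<kappa>1'"
          by (auto simp: omega_set_def)
        note o1' = omega_W[OF w1']
        have c1': "composite_choice P \<kappa>1'" using K1 k1' by auto
        have "choice_consistent (\<kappa>1 \<union> \<kappa>1')"
        proof (rule compat[of _ _ S])
          show "choice_consistent \<kappa>1" "choice_consistent \<kappa>1'" using c1 c1'
            by (auto simp: composite_choice_def)
          show "bayok S \<kappa>1" "bayok S \<kappa>1'" using b1 o1' by auto
          show "\<forall>D'. pin \<kappa>1 D' \<and> pin \<kappa>1' D' \<longrightarrow> Iv \<kappa>1 D' \<inter> Iv \<kappa>1' D' \<noteq> {}"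
          proof (intro allI impI)
            fix D' assume p: "pin \<kappa>1 D' \<and> pin \<kappa>1' D'"
            show "Iv \<kappa>1 D' \<inter> Iv \<kappa>1' D' \<noteq> {}"
            proof (cases "D' = D")
              case True
              then have "Iv \<kappa>1' D' = frame P D" using o1' p by (auto simp: ev'_def)
              then show ?thesis using True Iv_sub[OF c1] Iv_ne[OF c1] p by blast
            next
              case False
              then have "Iv \<kappa>1' D' = Iv \<kappa>1 D'" using o1' p by (auto simp: ev'_def ev_def)
              then show ?thesis using Iv_ne[OF c1] p by auto
            qed
          qed
        qed
        then have "\<kappa>1' = \<kappa>1" using pw k1 k1' by (auto simp: pairwise_incompatible_def incompatible_def)
        then have "Iv \<kappa>1 D = frame P D" using o1' x by (auto simp: ev'_def)
        then show ?thesis using x by simp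
      qed
    qed
  qed
  then show ?thesis using k2 o2 by auto
qed


lemma ess_inj:
  assumes K: "\<forall>\<kappa>\<in>K. composite_choice P \<kappa>" and pw: "pairwise_incompatible K"
    and S: "bayok S \<kappa>" "bayok S \<kappa>'" and k: "\<kappa> \<in> K" "\<kappa>' \<in> K" and e: "ess P \<kappa> = ess P \<kappa>'"
  shows "\<kappa> = \<kappa>'"
proof (rule ccontr)
  assume ne: "\<kappa> \<noteq> \<kappa>'"
  have c: "composite_choice P \<kappa>" "composite_choice P \<kappa>'" using K k by auto
  have "choice_consistent (\<kappa> \<union> \<kappa>')"
  proof (rule compat[OF _ _ S])
    show "choice_consistent \<kappa>" "choice_consistent \<kappa>'" using c by (auto simp: composite_choice_def)
    show "\<forall>D. pin \<kappa> D \<and> pin \<kappa>' D \<longrightarrow> Iv \<kappa> D \<inter> Iv \<kappa>' D \<noteq> {}"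
    proof (intro allI impI)
      fix D assume p: "pin \<kappa> D \<and> pin \<kappa>' D"
      show "Iv \<kappa> D \<inter> Iv \<kappa>' D \<noteq> {}"
      proof (cases "Iv \<kappa> D = frame P D \<or> Iv \<kappa>' D = frame P D")
        case True
        then show ?thesis using Iv_sub[OF c(1)] Iv_sub[OF c(2)] Iv_ne[OF c(1)] Iv_ne[OF c(2)] p
          by (metis inf.absorb_iff2 inf_commute)
      next
        case False
        then have "(D, Iv \<kappa> D) \<in> ess P \<kappa>'" using e p by (auto simp: ess_def)
        then have "Iv \<kappa>' D = Iv \<kappa> D" by (auto simp: ess_def)
        then show ?thesis using Iv_ne[OF c(1)] p by auto
      qed
    qed
  qed
  then show False using pw k ne by (auto simp: pairwise_incompatible_def incompatible_def)
qed

definition piw where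
  "piw P S = (\<Prod>f\<in>S. prob P f) * (\<Prod>f\<in>pfacts P - S. 1 - prob P f)"

lemma rho_c_sum:
  assumes wf: "wf_calp P" and c: "composite_choice P \<kappa>"
  shows "rho_c P \<kappa> = (\<Sum>S\<in>{S. S \<subseteq> pfacts P \<and> bayok S \<kappa>}. piw P S)"
proof -
  define T where "T = {f. BayC f True \<in> \<kappa>}"
  define Fa where "Fa = {f. BayC f False \<in> \<kappa>}"
  define R where "R = pfacts P - T - Fa"
  have fin: "finite (pfacts P)" using wf by (simp add: wf_calp_def)
  have TP: "T \<subseteq> pfacts P" "Fa \<subseteq> pfacts P" using c
    by (auto simp: T_def Fa_def composite_choice_def atomic_choice_def split: achoice.splits)
  have TF: "T \<inter> Fa = {}" using c by (auto simp: T_def Fa_def composite_choice_def cc_iff)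
  have finT: "finite T" "finite Fa" "finite R" using TP fin by (auto simp: R_def intro: finite_subset)
  have rc: "rho_c P \<kappa> = (\<Prod>f\<in>T. prob P f) * (\<Prod>f\<in>Fa. 1 - prob P f)"
    by (simp add: rho_c_def Bay_def T_def Fa_def)
  have set: "{S. S \<subseteq> pfacts P \<and> bayok S \<kappa>} = (\<lambda>X. T \<union> X) ` Pow R"
  proof
    show "{S. S \<subseteq> pfacts P \<and> bayok S \<kappa>} \<subseteq> (\<lambda>X. T \<union> X) ` Pow R"
    proof
      fix S assume "S \<in> {S. S \<subseteq> pfacts P \<and> bayok S \<kappa>}"
      then have "S = T \<union> (S - T)" "S - T \<in> Pow R"
        by (auto simp: bayok_def T_def Fa_def R_def)
      then show "S \<in> (\<lambda>X. T \<union> X) ` Pow R" by blast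
    qed
  next
    show "(\<lambda>X. T \<union> X) ` Pow R \<subseteq> {S. S \<subseteq> pfacts P \<and> bayok S \<kappa>}"
      using TP TF by (auto simp: bayok_def T_def Fa_def R_def)
  qed
  have inj: "inj_on (\<lambda>X. T \<union> X) (Pow R)" unfolding inj_on_def R_def by blast
  have piX: "piw P (T \<union> X) = ((\<Prod>f\<in>T. prob P f) * (\<Prod>f\<in>Fa. 1 - prob P f)) *
       ((\<Prod>f\<in>X. prob P f) * (\<Prod>f\<in>R - X. 1 - prob P f))" if X: "X \<in> Pow R" for X
  proof -
    have fX: "finite X" using X finT(3) by (auto intro: finite_subset)
    have d1: "T \<inter> X = {}" using X by (auto simp: R_def)
    have e2: "pfacts P - (T \<union> X) = Fa \<union> (R - X)" using X TP TF by (auto simp: R_def)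
    have d2: "Fa \<inter> (R - X) = {}" by (auto simp: R_def)
    have "(\<Prod>f\<in>T \<union> X. prob P f) = (\<Prod>f\<in>T. prob P f) * (\<Prod>f\<in>X. prob P f)"
      by (rule prod.union_disjoint[OF finT(1) fX d1])
    moreover have "(\<Prod>f\<in>Fa \<union> (R - X). 1 - prob P f) = (\<Prod>f\<in>Fa. 1 - prob P f) * (\<Prod>f\<in>R - X. 1 - prob P f)"
      by (rule prod.union_disjoint) (use finT d2 in auto)
    ultimately show ?thesis unfolding piw_def e2 by (simp add: algebra_simps)
  qed
  have "(\<Sum>S\<in>{S. S \<subseteq> pfacts P \<and> bayok S \<kappa>}. piw P S) = (\<Sum>X\<in>Pow R. piw P (T \<union> X))"
    unfolding set by (rule sum.reindex[OF inj, unfolded comp_def])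
  also have "\<dots> = (\<Sum>X\<in>Pow R. ((\<Prod>f\<in>T. prob P f) * (\<Prod>f\<in>Fa. 1 - prob P f)) *
       ((\<Prod>f\<in>X. prob P f) * (\<Prod>f\<in>R - X. 1 - prob P f)))"
    by (rule sum.cong) (auto simp: piX)
  also have "\<dots> = ((\<Prod>f\<in>T. prob P f) * (\<Prod>f\<in>Fa. 1 - prob P f)) *
       (\<Sum>X\<in>Pow R. (\<Prod>f\<in>X. prob P f) * (\<Prod>f\<in>R - X. 1 - prob P f))"
    by (simp add: sum_distrib_left)
  also have "\<dots> = ((\<Prod>f\<in>T. prob P f) * (\<Prod>f\<in>Fa. 1 - prob P f)) *
       (\<Prod>f\<in>R. prob P f + (1 - prob P f))"
    by (simp only: prod_add[OF finT(3)])
  also have "\<dots> = rho_c P \<kappa>" by (simp add: rc)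
  finally show ?thesis by simp
qed




lemma fin_bf: "wf_calp P \<Longrightarrow> finite (belief_facts P)"
proof -
  assume wf: "wf_calp P"
  have "belief_facts P \<subseteq> Sigma (domains P) (\<lambda>D. Pow (frame P D))"
    by (auto simp: belief_facts_def)
  moreover have "finite (Sigma (domains P) (\<lambda>D. Pow (frame P D)))"
    using wf by (auto simp: wf_calp_def belief_domain_def)
  ultimately show ?thesis by (rule finite_subset)
qed

lemma fin_K:
  assumes wf: "wf_calp P" and K: "\<forall>\<kappa>\<in>K. composite_choice P \<kappa>"
  shows "finite K"
proof -
  define AC where "AC = (\<lambda>(f,b). BayC f b) ` (pfacts P \<times> UNIV) \<union> (\<lambda>(D,B). BelC D B) ` belief_facts P"
  have "finite AC" using wf fin_bf[OF wf] by (auto simp: AC_def wf_calp_def)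
  moreover have "K \<subseteq> Pow AC"
  proof
    fix \<kappa> assume "\<kappa> \<in> K"
    then have "\<forall>c\<in>\<kappa>. atomic_choice P c" using K by (auto simp: composite_choice_def)
    show "\<kappa> \<in> Pow AC"
    proof (rule PowI, rule subsetI)
      fix c assume "c \<in> \<kappa>"
      then have ac: "atomic_choice P c" using \<open>\<forall>c\<in>\<kappa>. atomic_choice P c\<close> by blast
      show "c \<in> AC"
      proof (cases c)
        case (BayC f b)
        then have "f \<in> pfacts P" using ac by (simp add: atomic_choice_def)
        then have "(f, b) \<in> pfacts P \<times> UNIV" by simp
        then show ?thesis unfolding AC_def BayC by (rule UnI1[OF rev_image_eqI]) simp
      next
        case (BelC D B)
        then have "(D, B) \<in> belief_facts P" using ac by (simp add: atomic_choice_def belief_facts_def)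
        then show ?thesis unfolding AC_def BelC by (rule UnI2[OF rev_image_eqI]) simp
      qed
    qed
  qed
  ultimately show ?thesis by (meson finite_Pow_iff finite_subset)
qed

lemma fin_canon:
  assumes "composite_choice P \<kappa>" "wf_calp P"
  shows "finite (canon (Bel \<kappa>))"
proof -
  have "canon (Bel \<kappa>) \<subseteq> belief_facts P"
    using pin_dom[OF assms(1)] Iv_sub[OF assms(1)] by (auto simp: canon_Bel belief_facts_def)
  then show ?thesis using fin_bf[OF assms(2)] by (rule finite_subset)
qed

lemma canon_ess:
  fixes g :: "'d \<times> 'x set \<Rightarrow> real"
  assumes wf: "wf_calp P" and c: "composite_choice P \<kappa>" and g: "\<forall>D\<in>domains P. g (D, frame P D) = 1"
  shows "(\<Prod>x\<in>canon (Bel \<kappa>). g x) = (\<Prod>x\<in>ess P \<kappa>. g x)"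
proof (rule prod.mono_neutral_right[OF fin_canon[OF c wf]])
  show "ess P \<kappa> \<subseteq> canon (Bel \<kappa>)" by (auto simp: ess_alt)
  show "\<forall>i\<in>canon (Bel \<kappa>) - ess P \<kappa>. g i = 1"
    using g pin_dom[OF c] by (auto simp: ess_alt canon_Bel)
qed

definition G where
  "G P g K S = (\<Sum>\<kappa>\<in>{\<kappa>\<in>K. bayok S \<kappa>}. \<Prod>x\<in>ess P \<kappa>. g x)"

lemma decomp:
  fixes g :: "'d \<times> 'x set \<Rightarrow> real"
  assumes wf: "wf_calp P" and K: "\<forall>\<kappa>\<in>K. composite_choice P \<kappa>"
    and g: "\<forall>D\<in>domains P. g (D, frame P D) = 1"
  shows "(\<Sum>\<kappa>\<in>K. rho_c P \<kappa> * (\<Prod>x\<in>canon (Bel \<kappa>). g x)) =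
         (\<Sum>S\<in>Pow (pfacts P). piw P S * G P g K S)"
proof -
  have finK: "finite K" by (rule fin_K[OF wf K])
  have finP: "finite (Pow (pfacts P))" using wf by (simp add: wf_calp_def)
  have "(\<Sum>\<kappa>\<in>K. rho_c P \<kappa> * (\<Prod>x\<in>canon (Bel \<kappa>). g x)) =
        (\<Sum>\<kappa>\<in>K. \<Sum>S\<in>Pow (pfacts P). (if bayok S \<kappa> then piw P S * (\<Prod>x\<in>ess P \<kappa>. g x) else 0))"
  proof (rule sum.cong[OF refl])
    fix \<kappa> assume k: "\<kappa> \<in> K"
    have c: "composite_choice P \<kappa>" using K k by auto
    have r: "rho_c P \<kappa> = (\<Sum>S\<in>Pow (pfacts P). if bayok S \<kappa> then piw P S else 0)"
      unfolding rho_c_sum[OF wf c] sum.inter_filter[OF finP, symmetric]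
      by (rule sum.cong) auto
    show "rho_c P \<kappa> * (\<Prod>x\<in>canon (Bel \<kappa>). g x) =
        (\<Sum>S\<in>Pow (pfacts P). (if bayok S \<kappa> then piw P S * (\<Prod>x\<in>ess P \<kappa>. g x) else 0))"
      unfolding canon_ess[OF wf c g] r sum_distrib_right by (rule sum.cong) auto
  qed
  also have "\<dots> = (\<Sum>S\<in>Pow (pfacts P). \<Sum>\<kappa>\<in>K. (if bayok S \<kappa> then piw P S * (\<Prod>x\<in>ess P \<kappa>. g x) else 0))"
    by (rule sum.swap)
  also have "\<dots> = (\<Sum>S\<in>Pow (pfacts P). piw P S * G P g K S)"
  proof (rule sum.cong[OF refl])
    fix S
    show "(\<Sum>\<kappa>\<in>K. (if bayok S \<kappa> then piw P S * (\<Prod>x\<in>ess P \<kappa>. g x) else 0)) = piw P S * G P g K S"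
      unfolding G_def sum_distrib_left sum.inter_filter[OF finK, symmetric] by simp
  qed
  finally show ?thesis .
qed

lemma G_eq:
  assumes wf: "wf_calp P" and K1: "\<forall>\<kappa>\<in>K1. composite_choice P \<kappa>" and K2: "\<forall>\<kappa>\<in>K2. composite_choice P \<kappa>"
    and pw1: "pairwise_incompatible K1" and pw2: "pairwise_incompatible K2"
    and eq: "omega_set P K1 = omega_set P K2" and S: "S \<subseteq> pfacts P"
  shows "G P g K1 S = G P g K2 S"
proof -
  have inj1: "inj_on (ess P) {\<kappa>\<in>K1. bayok S \<kappa>}"
    using ess_inj[OF K1 pw1] by (auto simp: inj_on_def)
  have inj2: "inj_on (ess P) {\<kappa>\<in>K2. bayok S \<kappa>}"
    using ess_inj[OF K2 pw2] by (auto simp: inj_on_def)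
  have im: "ess P ` {\<kappa>\<in>K1. bayok S \<kappa>} = ess P ` {\<kappa>\<in>K2. bayok S \<kappa>}"
  proof
    show "ess P ` {\<kappa>\<in>K1. bayok S \<kappa>} \<subseteq> ess P ` {\<kappa>\<in>K2. bayok S \<kappa>}"
    proof
      fix y assume "y \<in> ess P ` {\<kappa>\<in>K1. bayok S \<kappa>}"
      then obtain k where k: "k \<in> K1" "bayok S k" "y = ess P k" by auto
      then obtain k2 where "k2 \<in> K2" "bayok S k2" "ess P k2 = ess P k"
        using match[OF wf K1 K2 pw1 eq k(1,2) S] by blast
      then show "y \<in> ess P ` {\<kappa>\<in>K2. bayok S \<kappa>}" using k(3) by auto
    qed
    show "ess P ` {\<kappa>\<in>K2. bayok S \<kappa>} \<subseteq> ess P ` {\<kappa>\<in>K1. bayok S \<kappa>}"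
    proof
      fix y assume "y \<in> ess P ` {\<kappa>\<in>K2. bayok S \<kappa>}"
      then obtain k where k: "k \<in> K2" "bayok S k" "y = ess P k" by auto
      then obtain k2 where "k2 \<in> K1" "bayok S k2" "ess P k2 = ess P k"
        using match[OF wf K2 K1 pw2 eq[symmetric] k(1,2) S] by blast
      then show "y \<in> ess P ` {\<kappa>\<in>K1. bayok S \<kappa>}" using k(3) by auto
    qed
  qed
  have "G P g K1 S = (\<Sum>y\<in>ess P ` {\<kappa>\<in>K1. bayok S \<kappa>}. \<Prod>x\<in>y. g x)"
    unfolding G_def by (simp add: sum.reindex[OF inj1])
  also have "\<dots> = (\<Sum>y\<in>ess P ` {\<kappa>\<in>K2. bayok S \<kappa>}. \<Prod>x\<in>y. g x)" by (simp only: im)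
  also have "\<dots> = G P g K2 S"
    unfolding G_def by (simp add: sum.reindex[OF inj2])
  finally show ?thesis .
qed

lemma main_g:
  fixes g :: "'d \<times> 'x set \<Rightarrow> real"
  assumes wf: "wf_calp P" and K1: "\<forall>\<kappa>\<in>K1. composite_choice P \<kappa>" and K2: "\<forall>\<kappa>\<in>K2. composite_choice P \<kappa>"
    and pw1: "pairwise_incompatible K1" and pw2: "pairwise_incompatible K2"
    and eq: "omega_set P K1 = omega_set P K2"
    and g: "\<forall>D\<in>domains P. g (D, frame P D) = 1"
  shows "(\<Sum>\<kappa>\<in>K1. rho_c P \<kappa> * (\<Prod>x\<in>canon (Bel \<kappa>). g x)) =
         (\<Sum>\<kappa>\<in>K2. rho_c P \<kappa> * (\<Prod>x\<in>canon (Bel \<kappa>). g x))"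
  unfolding decomp[OF wf K1 g] decomp[OF wf K2 g]
  using G_eq[OF wf K1 K2 pw1 pw2 eq] by (intro sum.cong) auto

lemma Bel_frame: "wf_calp P \<Longrightarrow> D \<in> domains P \<Longrightarrow> Belief P D (frame P D) = 1"
  by (auto simp: wf_calp_def belief_domain_def Belief_def)

lemma Pl_frame: "wf_calp P \<Longrightarrow> D \<in> domains P \<Longrightarrow> Plaus P D (frame P D) = 1"
  by (auto simp: wf_calp_def belief_domain_def Belief_def Plaus_def)

theorem mainTheorem3:
  fixes P :: "('r, 'f, 'd, 'x) calp"
    and K1 K2 :: "('f, 'd, 'x) achoice set set"
  assumes "wf_calp P"
    and "\<forall>\<kappa>\<in>K1. composite_choice P \<kappa>"
    and "\<forall>\<kappa>\<in>K2. composite_choice P \<kappa>"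
    and "pairwise_incompatible K1"
    and "pairwise_incompatible K2"
    and "omega_set P K1 = omega_set P K2"
  shows "xi_c P K1 = xi_c P K2"
proof -
  have f: "fst (rho_comp P \<kappa>) = rho_c P \<kappa> * (\<Prod>x\<in>canon (Bel \<kappa>). (\<lambda>(D,E). Belief P D E) x)" for \<kappa>
    by (simp add: rho_comp_def imult_def iprod_def case_prod_beta)
  have s: "snd (rho_comp P \<kappa>) = rho_c P \<kappa> * (\<Prod>x\<in>canon (Bel \<kappa>). (\<lambda>(D,E). Plaus P D E) x)" for \<kappa>
    by (simp add: rho_comp_def imult_def iprod_def case_prod_beta)
  have "fst (xi_c P K1) = fst (xi_c P K2)"
    unfolding xi_c_def isum_def fst_conv f
    by (rule main_g[OF assms]) (use Bel_frame[OF assms(1)] in auto)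
  moreover have "snd (xi_c P K1) = snd (xi_c P K2)"
    unfolding xi_c_def isum_def snd_conv s
    by (rule main_g[OF assms]) (use Pl_frame[OF assms(1)] in auto)
  ultimately show ?thesis by (simp add: prod_eq_iff)
qed

end
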